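(* Let $X$, $Y$, $Z$ be positive, absolutely continuous random variables with densities $f_X$, $f_Y$, $f_Z$, such that $X$ and $Y$ are independent and $Z \stackrel{d}{=} X/(X+Y)$ (so $Z$ takes values in $(0,1)$). Suppose that the density of $Y$ admits the decomposition $$f_Y(sx)=\mathbb{A}(s)\,\mathbb{B}(x)\,\mathbb{C}(sx),\qquad x,s>0,$$ for some positive real-valued functions $\mathbb{A},\mathbb{B},\mathbb{C}$ on $(0,\infty)$, where $$\mathbb{C}(x)=\exp(-\lambda x^\theta),\qquad x>0,$$ for some constants $\lambda,\theta>0$. Then the density of $X$ is given, for $x>0$, by $$f_X(x)=\frac{\lambda\theta}{x^{2-\theta}\,\mathbb{B}(x)}\;\mathcal{L}^{-1}\left\{\frac{1}{\mathbb{A}(s^{1/\theta})\,(s^{1/\theta}+1)^2}\, f_Z\!\left(\frac{1}{s^{1/\theta}+1}\right)\right\}(\lambda x^\theta).$$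
   Context: $\mathcal{L}$ denotes the Laplace transform, $\mathcal{L}\{g\}(s)=\int_0^\infty e^{-st}g(t)\,\mathrm{d}t$, and $\mathcal{L}^{-1}$ denotes the inverse Laplace transform: $\mathcal{L}^{-1}\{F\}$ is the function $g$ on $(0,\infty)$ with $\mathcal{L}\{g\}=F$; the expression $\mathcal{L}^{-1}\{F\}(t)$ means this function evaluated at $t$. The notation $\stackrel{d}{=}$ means equality in distribution. *)

theory Defs
  imports "HOL-Probability.Probability"
begin

definition laplace_transform :: "(real \<Rightarrow> real) \<Rightarrow> real \<Rightarrow> real" where
  "laplace_transform g s = (LINT t:{0<..}|lborel. exp (- s * t) * g t)"

definition has_laplace_at :: "(real \<Rightarrow> real) \<Rightarrow> real \<Rightarrow> real \<Rightarrow> bool" where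
  "has_laplace_at g s v \<longleftrightarrow>
     set_integrable lborel {0<..} (\<lambda>t. exp (- s * t) * g t) \<and> laplace_transform g s = v"

text \<open>g is an inverse Laplace transform of F: L{g} = F on (0,infinity)
  (almost everywhere, as F is built from a density defined only up to null sets).\<close>
definition is_inverse_laplace :: "(real \<Rightarrow> real) \<Rightarrow> (real \<Rightarrow> real) \<Rightarrow> bool" where
  "is_inverse_laplace g F \<longleftrightarrow> (AE s in lborel. s > 0 \<longrightarrow> has_laplace_at g s (F s))"

end

theory Submission
  imports Defs
begin

lemma subst_pos:
  fixes f g g' :: "real \<Rightarrow> real" and T :: "real set"
  assumes f[measurable]: "f \<in> borel_measurable borel"
    and gm[measurable]: "g \<in> borel_measurable borel" and g'm[measurable]: "g' \<in> borel_measurable borel"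
    and der: "\<And>x. x > 0 \<Longrightarrow> (g has_real_derivative g' x) (at x)"
    and cont: "continuous_on {0<..} g'"
    and nn: "\<And>x. x > 0 \<Longrightarrow> g' x \<ge> 0"
    and img: "g ` {0<..} = T"
  shows "(\<integral>\<^sup>+x. f x * indicator T x \<partial>lborel) = (\<integral>\<^sup>+x. f (g x) * g' x * indicator {0<..} x \<partial>lborel)"
proof -
  define a where "a n = 1 / real (Suc n)" for n
  define b where "b n = real (Suc n)" for n
  have a_pos: "a n > 0" for n by (simp add: a_def)
  have ab: "a n \<le> b n" for n by (simp add: a_def b_def field_simps)
  have a_dec: "a (Suc n) \<le> a n" for n by (simp add: a_def frac_le)
  have b_inc: "b n \<le> b (Suc n)" for n by (simp add: b_def)
  have mono: "g x \<le> g y" if "0 < x" "x \<le> y" for x y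
  proof -
    have "\<And>z. z \<in> {x..y} \<Longrightarrow> (g has_real_derivative g' z) (at z)" using der that by auto
    moreover have "\<And>z. z \<in> {x..y} \<Longrightarrow> g' z \<ge> 0" using nn that by auto
    ultimately show ?thesis using deriv_nonneg_imp_mono[of x y g g'] that by auto
  qed
  have contg: "continuous_on {0<..} g"
    using der by (meson DERIV_isCont continuous_at_imp_continuous_on greaterThan_iff)
  define h where "h x = ennreal (f x)" for x
  define k where "k x = ennreal (f (g x) * g' x)" for x
  have hm[measurable]: "h \<in> borel_measurable lborel" unfolding h_def by measurable
  have km[measurable]: "k \<in> borel_measurable lborel" unfolding k_def by measurable
  have step: "(\<integral>\<^sup>+x. f x * indicator {g (a n)..g (b n)} x \<partial>lborel) =
        (\<integral>\<^sup>+x. f (g x) * g' x * indicator {a n..b n} x \<partial>lborel)" for n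
  proof (rule nn_integral_substitution)
    show "\<And>x. x \<in> {a n..b n} \<Longrightarrow> (g has_real_derivative g' x) (at x)"
      using der a_pos by (meson atLeastAtMost_iff less_le_trans)
    show "continuous_on {a n..b n} g'"
      by (rule continuous_on_subset[OF cont]) (use a_pos[of n] in auto)
    show "\<And>x. x \<in> {a n..b n} \<Longrightarrow> 0 \<le> g' x"
      using nn a_pos by (meson atLeastAtMost_iff less_le_trans)
  qed (auto simp: ab set_borel_measurable_def)
  have eq1: "(\<integral>\<^sup>+x. f x * indicator S x \<partial>lborel) = emeasure (density lborel h) S" if "S \<in> sets borel" for S
    using that by (subst emeasure_density) (auto simp: h_def intro!: nn_integral_cong split: split_indicator)
  have eq2: "(\<integral>\<^sup>+x. f (g x) * g' x * indicator S x \<partial>lborel) = emeasure (density lborel k) S" if "S \<in> sets borel" for S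
    using that by (subst emeasure_density) (auto simp: k_def intro!: nn_integral_cong split: split_indicator)
  have U1: "(\<Union>n. {g (a n)..g (b n)}) = T"
  proof safe
    fix u n assume u: "u \<in> {g (a n)..g (b n)}"
    have "continuous_on {a n..b n} g"
      by (rule continuous_on_subset[OF contg]) (use a_pos[of n] in auto)
    then obtain x where "a n \<le> x" "x \<le> b n" "g x = u" using IVT'[of g "a n" u "b n"] u ab by auto
    then show "u \<in> T" using img a_pos[of n] by force
  next
    fix u assume "u \<in> T"
    then obtain x where x: "x > 0" "u = g x" using img by auto
    obtain n where n: "max x (1/x) < real n" using reals_Archimedean2 by blast
    have "a n \<le> x"
    proof -
      have "1/x < real (Suc n)" using n by auto
      then show ?thesis unfolding a_def using x by (simp add: field_simps)
    qed
    moreover have "x \<le> b n" using n by (simp add: b_def)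
    ultimately show "u \<in> (\<Union>n. {g (a n)..g (b n)})" using mono x a_pos[of n] by fastforce
  qed
  have U2: "(\<Union>n. {a n..b n}) = {0<..}"
  proof safe
    fix x n assume "x \<in> {a n..b n}" then show "0 < x" using a_pos[of n] by auto
  next
    fix x :: real assume x: "0 < x"
    obtain n where n: "max x (1/x) < real n" using reals_Archimedean2 by blast
    have "a n \<le> x"
    proof -
      have "1/x < real (Suc n)" using n by auto
      then show ?thesis unfolding a_def using x by (simp add: field_simps)
    qed
    moreover have "x \<le> b n" using n by (simp add: b_def)
    ultimately show "x \<in> (\<Union>n. {a n..b n})" by auto
  qed
  have inc1: "incseq (\<lambda>n. {g (a n)..g (b n)})"
  proof (rule incseq_SucI)
    fix n
    have "g (a (Suc n)) \<le> g (a n)" by (rule mono) (use a_pos a_dec in auto)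
    moreover have "g (b n) \<le> g (b (Suc n))" by (rule mono) (use a_pos ab b_inc in \<open>auto intro: less_le_trans\<close>)
    ultimately show "{g (a n)..g (b n)} \<subseteq> {g (a (Suc n))..g (b (Suc n))}" by auto
  qed
  have inc2: "incseq (\<lambda>n. {a n..b n})"
    by (rule incseq_SucI) (use a_dec b_inc in \<open>auto intro: order_trans\<close>)
  have TB: "T \<in> sets borel" using U1[symmetric] by auto
  have "(\<integral>\<^sup>+x. f x * indicator T x \<partial>lborel) = emeasure (density lborel h) (\<Union>n. {g (a n)..g (b n)})"
    using eq1[OF TB] U1 by simp
  also have "\<dots> = (SUP n. emeasure (density lborel h) {g (a n)..g (b n)})"
    by (rule SUP_emeasure_incseq[symmetric]) (use inc1 in auto)
  also have "\<dots> = (SUP n. emeasure (density lborel k) {a n..b n})"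
    using step eq1 eq2 by simp
  also have "\<dots> = emeasure (density lborel k) (\<Union>n. {a n..b n})"
    by (rule SUP_emeasure_incseq) (use inc2 in auto)
  also have "\<dots> = (\<integral>\<^sup>+x. f (g x) * g' x * indicator {0<..} x \<partial>lborel)"
    using eq2[of "{0<..}"] U2 by simp
  finally show ?thesis .
qed

theorem theorem1:
  fixes M :: "'a measure"
    and X Y Z :: "'a \<Rightarrow> real"
    and fX fY fZ :: "real \<Rightarrow> real"
    and A B C :: "real \<Rightarrow> real"
    and lam \<theta> :: real
  assumes "prob_space M"
    and fX_nonneg: "\<And>x. fX x \<ge> 0" and fY_nonneg: "\<And>x. fY x \<ge> 0" and fZ_nonneg: "\<And>x. fZ x \<ge> 0"
    and densX: "distributed M lborel X (\<lambda>x. ennreal (fX x))"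
    and densY: "distributed M lborel Y (\<lambda>x. ennreal (fY x))"
    and densZ: "distributed M lborel Z (\<lambda>x. ennreal (fZ x))"
    and posX: "AE \<omega> in M. X \<omega> > 0"
    and posY: "AE \<omega> in M. Y \<omega> > 0"
    and posZ: "AE \<omega> in M. Z \<omega> > 0"
    and indep: "prob_space.indep_var M borel X borel Y"
    and Z_eq: "distr M borel Z = distr M borel (\<lambda>\<omega>. X \<omega> / (X \<omega> + Y \<omega>))"
    and A_pos: "\<And>x. x > 0 \<Longrightarrow> A x > 0"
    and B_pos: "\<And>x. x > 0 \<Longrightarrow> B x > 0"
    and C_pos: "\<And>x. x > 0 \<Longrightarrow> C x > 0"
    and decomp: "\<And>x s. x > 0 \<Longrightarrow> s > 0 \<Longrightarrow> fY (s * x) = A s * B x * C (s * x)"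
    and lam_pos: "lam > 0" and \<theta>_pos: "\<theta> > 0"
    and C_def: "\<And>x. x > 0 \<Longrightarrow> C x = exp (- lam * x powr \<theta>)"
  shows "\<exists>g. is_inverse_laplace g
               (\<lambda>s. 1 / (A (s powr (1 / \<theta>)) * (s powr (1 / \<theta>) + 1)\<^sup>2)
                     * fZ (1 / (s powr (1 / \<theta>) + 1)))
          \<and> (AE x in lborel. x > 0 \<longrightarrow>
               fX x = lam * \<theta> / (x powr (2 - \<theta>) * B x) * g (lam * x powr \<theta>))"
proof -
  interpret P: prob_space M by fact
  have fXm[measurable]: "fX \<in> borel_measurable borel"
  proof -
    have "(\<lambda>x. ennreal (fX x)) \<in> borel_measurable lborel" using densX by (rule distributed_borel_measurable)
    then show ?thesis using fX_nonneg by simp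
  qed
  have fYm[measurable]: "fY \<in> borel_measurable borel"
  proof -
    have "(\<lambda>x. ennreal (fY x)) \<in> borel_measurable lborel" using densY by (rule distributed_borel_measurable)
    then show ?thesis using fY_nonneg by simp
  qed
  have fZm[measurable]: "fZ \<in> borel_measurable borel"
  proof -
    have "(\<lambda>x. ennreal (fZ x)) \<in> borel_measurable lborel" using densZ by (rule distributed_borel_measurable)
    then show ?thesis using fZ_nonneg by simp
  qed
  have Xm[measurable]: "X \<in> borel_measurable M" using densX distributed_measurable by (metis measurable_lborel1)
  have Ym[measurable]: "Y \<in> borel_measurable M" using densY distributed_measurable by (metis measurable_lborel1)
  have Zm[measurable]: "Z \<in> borel_measurable M" using densZ distributed_measurable by (metis measurable_lborel1)
  have joint: "distributed M (lborel \<Otimes>\<^sub>M lborel) (\<lambda>\<omega>. (X \<omega>, Y \<omega>)) (\<lambda>(x, y). ennreal (fX x) * ennreal (fY y))"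
  proof (rule P.distributed_joint_indep'[OF _ _ densX densY])
    show "sigma_finite_measure (lborel :: real measure)" by (rule lborel.sigma_finite_measure_axioms)
    then show "sigma_finite_measure (lborel :: real measure)" .
    have e: "distr M borel X \<Otimes>\<^sub>M distr M borel Y = distr M (borel \<Otimes>\<^sub>M borel) (\<lambda>x. (X x, Y x))"
      using indep P.indep_var_distribution_eq by blast
    have e1: "distr M lborel X = distr M borel X" by (rule distr_cong) auto
    have e2: "distr M lborel Y = distr M borel Y" by (rule distr_cong) auto
    have e3: "distr M (lborel \<Otimes>\<^sub>M lborel) (\<lambda>x. (X x, Y x)) = distr M (borel \<Otimes>\<^sub>M borel) (\<lambda>x. (X x, Y x))"
      by (rule distr_cong) (auto intro!: sets_pair_measure_cong)
    show "distr M lborel X \<Otimes>\<^sub>M distr M lborel Y = distr M (lborel \<Otimes>\<^sub>M lborel) (\<lambda>x. (X x, Y x))"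
      using e e1 e2 e3 by simp
  qed
  define \<Phi> where "\<Phi> t = (\<integral>\<^sup>+x. ennreal (x * fX x * fY (t * x)) * indicator {0<..} x \<partial>lborel)" for t
  define f1 where "f1 t = ennreal (fZ (1 / (t + 1)) / (t + 1)\<^sup>2 * indicator {0<..} t)" for t
  define f2 where "f2 t = \<Phi> t * indicator {0<..} t" for t
  have \<Phi>m[measurable]: "\<Phi> \<in> borel_measurable borel"
    unfolding \<Phi>_def by measurable
  have f1m[measurable]: "f1 \<in> borel_measurable borel" unfolding f1_def by measurable
  have f2m[measurable]: "f2 \<in> borel_measurable borel" unfolding f2_def by measurable
  have main: "(\<integral>\<^sup>+t. f1 t * indicator E t \<partial>lborel) = (\<integral>\<^sup>+t. f2 t * indicator E t \<partial>lborel)"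
    if E[measurable]: "E \<in> sets borel" for E
  proof -
    define H :: "real \<Rightarrow> ennreal" where "H z = indicator E (1/z - 1) * indicator {0<..<1::real} z" for z
    define K :: "real \<times> real \<Rightarrow> ennreal" where "K p = indicator E (snd p / fst p) * indicator {0<..} (fst p) * indicator {0<..} (snd p)" for p
    have Hm[measurable]: "H \<in> borel_measurable borel" unfolding H_def by measurable
    have Km[measurable]: "K \<in> borel_measurable (borel \<Otimes>\<^sub>M borel)" unfolding K_def by measurable
    have S1: "(\<integral>\<^sup>+y. (fZ (-y) * indicator E (-1/y - 1)) * indicator {-1<..<0} y \<partial>lborel) =
       (\<integral>\<^sup>+t. (fZ (-(-1/(t+1))) * indicator E (-1/(-1/(t+1)) - 1)) * (1/(t+1)^2) * indicator {0<..} t \<partial>lborel)"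
    proof (rule subst_pos[where f = "\<lambda>y. fZ (-y) * indicator E (-1/y - 1)" and g = "\<lambda>t. -1/(t+1)" and g' = "\<lambda>t. 1/(t+1)^2"])
      show "((\<lambda>t. -1/(t+1)) has_real_derivative 1/(x+1)^2) (at x)" if "x > 0" for x :: real
        using that by (auto intro!: derivative_eq_intros simp: power2_eq_square)
      show "continuous_on {0<..} (\<lambda>t::real. 1/(t+1)^2)"
        by (intro continuous_intros) auto
      show "(\<lambda>t::real. -1/(t+1)) ` {0<..} = {-1<..<0}"
      proof (intro subset_antisym subsetI)
        fix y assume "y \<in> (\<lambda>t::real. -1/(t+1)) ` {0<..}"
        then show "y \<in> {-1<..<0}" by (auto simp: field_simps)
      next
        fix y :: real assume "y \<in> {-1<..<0}"
        then have y: "-1 < y" "y < 0" by auto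
        have "y = -1/((-1/y - 1) + 1)" using y by (simp add: field_simps)
        moreover have "-1/y - 1 > 0" using y by (simp add: field_simps)
        ultimately show "y \<in> (\<lambda>t. -1/(t+1)) ` {0<..}" by (intro image_eqI[where x="-1/y - 1"]) auto
      qed
    qed auto
    have S2: "(\<integral>\<^sup>+z. fZ z * indicator E (1/z - 1) * indicator {0<..<1} z \<partial>lborel) =
       (\<integral>\<^sup>+y. (fZ (-y) * indicator E (-1/y - 1)) * indicator {-1<..<0} y \<partial>lborel)"
      by (subst nn_integral_real_affine[where c="-1" and t=0]) (auto intro!: nn_integral_cong split: split_indicator)
    have "(\<integral>\<^sup>+t. f1 t * indicator E t \<partial>lborel) =
       (\<integral>\<^sup>+t. (fZ (-(-1/(t+1))) * indicator E (-1/(-1/(t+1)) - 1)) * (1/(t+1)^2) * indicator {0<..} t \<partial>lborel)"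
      unfolding f1_def by (auto intro!: nn_integral_cong simp: ennreal_mult' split: split_indicator)
    also have "\<dots> = (\<integral>\<^sup>+z. fZ z * indicator E (1/z - 1) * indicator {0<..<1} z \<partial>lborel)"
      using S1 S2 by simp
    also have "\<dots> = (\<integral>\<^sup>+z. ennreal (fZ z) * H z \<partial>lborel)"
      unfolding H_def by (auto intro!: nn_integral_cong split: split_indicator)
    also have "\<dots> = (\<integral>\<^sup>+\<omega>. H (Z \<omega>) \<partial>M)"
      by (rule distributed_nn_integral[OF densZ]) simp
    also have "\<dots> = (\<integral>\<^sup>+z. H z \<partial>distr M borel Z)"
      by (simp add: nn_integral_distr)
    also have "\<dots> = (\<integral>\<^sup>+z. H z \<partial>distr M borel (\<lambda>\<omega>. X \<omega> / (X \<omega> + Y \<omega>)))"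
      by (simp add: Z_eq)
    also have "\<dots> = (\<integral>\<^sup>+\<omega>. H (X \<omega> / (X \<omega> + Y \<omega>)) \<partial>M)"
      by (simp add: nn_integral_distr)
    also have "\<dots> = (\<integral>\<^sup>+\<omega>. K (X \<omega>, Y \<omega>) \<partial>M)"
    proof (rule nn_integral_cong_AE)
      show "AE \<omega> in M. H (X \<omega> / (X \<omega> + Y \<omega>)) = K (X \<omega>, Y \<omega>)"
        using posX posY
      proof eventually_elim
        case (elim \<omega>)
        define x where "x = X \<omega>"
        define y where "y = Y \<omega>"
        have xy: "x > 0" "y > 0" using elim by (auto simp: x_def y_def)
        have "1 / (x / (x + y)) - 1 = y / x" using xy by (simp add: field_simps)
        moreover have "x / (x + y) > 0" "x / (x + y) < 1" using xy by (auto simp: field_simps)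
        ultimately show ?case unfolding H_def K_def x_def[symmetric] y_def[symmetric] using xy by simp
      qed
    qed
    also have "\<dots> = (\<integral>\<^sup>+p. (\<lambda>(x, y). ennreal (fX x) * ennreal (fY y)) p * K p \<partial>(lborel \<Otimes>\<^sub>M lborel))"
      by (rule distributed_nn_integral[OF joint, symmetric]) simp
    also have "\<dots> = (\<integral>\<^sup>+x. \<integral>\<^sup>+y. ennreal (fX x) * ennreal (fY y) * K (x, y) \<partial>lborel \<partial>lborel)"
      by (subst lborel.nn_integral_fst[symmetric]) (auto simp: case_prod_beta)
    also have "\<dots> = (\<integral>\<^sup>+x. \<integral>\<^sup>+t. ennreal (x * fX x * fY (t * x)) * indicator {0<..} x * indicator E t * indicator {0<..} t \<partial>lborel \<partial>lborel)"
    proof (rule nn_integral_cong)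
      fix x :: real
      show "(\<integral>\<^sup>+y. ennreal (fX x) * ennreal (fY y) * K (x, y) \<partial>lborel) =
        (\<integral>\<^sup>+t. ennreal (x * fX x * fY (t * x)) * indicator {0<..} x * indicator E t * indicator {0<..} t \<partial>lborel)"
      proof (cases "x > 0")
        case False
        then show ?thesis unfolding K_def by simp
      next
        case True
        have "(\<integral>\<^sup>+y. ennreal (fX x) * ennreal (fY y) * K (x, y) \<partial>lborel) =
            ennreal \<bar>x\<bar> * (\<integral>\<^sup>+t. ennreal (fX x) * ennreal (fY (0 + x * t)) * K (x, 0 + x * t) \<partial>lborel)"
          using True by (subst nn_integral_real_affine[where c=x and t=0]) auto
        also have "\<dots> = (\<integral>\<^sup>+t. ennreal x * (ennreal (fX x) * ennreal (fY (0 + x * t)) * K (x, 0 + x * t)) \<partial>lborel)"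
          using True by (subst nn_integral_cmult) auto
        also have "\<dots> = (\<integral>\<^sup>+t. ennreal (x * fX x * fY (t * x)) * indicator {0<..} x * indicator E t * indicator {0<..} t \<partial>lborel)"
          using True fX_nonneg fY_nonneg
          by (intro nn_integral_cong) (auto simp: K_def ennreal_mult' mult.commute mult.left_commute zero_less_mult_iff split: split_indicator)
        finally show ?thesis .
      qed
    qed
    also have "\<dots> = (\<integral>\<^sup>+t. \<integral>\<^sup>+x. ennreal (x * fX x * fY (t * x)) * indicator {0<..} x * indicator E t * indicator {0<..} t \<partial>lborel \<partial>lborel)"
      by (rule lborel_pair.Fubini'[symmetric]) measurable
    also have "\<dots> = (\<integral>\<^sup>+t. f2 t * indicator E t \<partial>lborel)"
      unfolding f2_def \<Phi>_def
      by (intro nn_integral_cong) (auto simp: nn_integral_multc[symmetric] mult.assoc mult.commute[of "indicator E _"])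
    finally show ?thesis .
  qed
  have "density lborel f1 = density lborel f2"
    by (rule measure_eqI) (auto simp: emeasure_density main)
  then have AEK: "AE t in lborel. f1 t = f2 t"
    by (subst sigma_finite_measure.density_unique_iff[OF lborel.sigma_finite_measure_axioms, symmetric]) auto
  define Bm where "Bm x = fY x / (A 1 * exp (- lam * x powr \<theta>))" for x
  define G where "G u = ((u/lam) powr (1/\<theta>)) powr (2-\<theta>) * fX ((u/lam) powr (1/\<theta>)) * Bm ((u/lam) powr (1/\<theta>)) / (lam*\<theta>)" for u
  have A1: "A 1 > 0" using A_pos by simp
  have BmB: "Bm x = B x" if "x > 0" for x
  proof -
    have "fY (1 * x) = A 1 * B x * C (1 * x)" using decomp[of x 1] that by simp
    then show ?thesis using that A1 C_def[OF that] unfolding Bm_def by simp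
  qed
  have Bm_nn: "Bm x \<ge> 0" for x unfolding Bm_def using fY_nonneg A1 by simp
  have Gm[measurable]: "G \<in> borel_measurable borel" unfolding G_def Bm_def by measurable
  have G_nn: "G u \<ge> 0" for u unfolding G_def using fX_nonneg Bm_nn lam_pos \<theta>_pos by simp
  have inv: "(lam * x powr \<theta> / lam) powr (1/\<theta>) = x" if "x > 0" for x
    using that lam_pos \<theta>_pos by (simp add: powr_powr)
  have Gx: "G (lam * x powr \<theta>) = x powr (2-\<theta>) * fX x * B x / (lam*\<theta>)" if "x > 0" for x
    unfolding G_def inv[OF that] BmB[OF that] ..
  have part2: "AE x in lborel. x > 0 \<longrightarrow> fX x = lam * \<theta> / (x powr (2 - \<theta>) * B x) * G (lam * x powr \<theta>)"
  proof (rule AE_I2, rule impI)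
    fix x :: real assume x: "x > 0"
    have "B x > 0" using B_pos x by simp
    then show "fX x = lam * \<theta> / (x powr (2 - \<theta>) * B x) * G (lam * x powr \<theta>)"
      unfolding Gx[OF x] using x lam_pos \<theta>_pos by (simp add: field_simps)
  qed
  from AEK obtain N0 where N0: "{t \<in> space lborel. \<not> f1 t = f2 t} \<subseteq> N0" "emeasure lborel N0 = 0" "N0 \<in> sets lborel"
    by (rule AE_E)
  have N0m[measurable]: "N0 \<in> sets borel" using N0(3) by simp
  have AEs: "AE s in lborel. s > 0 \<longrightarrow> s powr (1/\<theta>) \<notin> N0"
  proof -
    have "(\<integral>\<^sup>+u. ennreal (indicator N0 u * indicator {0<..} u) \<partial>lborel) =
      (\<integral>\<^sup>+s. indicator N0 (s powr (1/\<theta>)) * ((1/\<theta>) * s powr (1/\<theta> - 1)) * indicator {0<..} s \<partial>lborel)"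
    proof (rule subst_pos[where f = "indicator N0" and g = "\<lambda>s. s powr (1/\<theta>)" and g' = "\<lambda>s. (1/\<theta>) * s powr (1/\<theta> - 1)"])
      show "((\<lambda>s. s powr (1/\<theta>)) has_real_derivative (1/\<theta>) * x powr (1/\<theta> - 1)) (at x)" if "x > 0" for x :: real
        using has_real_derivative_powr[OF that, of "1/\<theta>"] by simp
      show "continuous_on {0<..} (\<lambda>s::real. (1/\<theta>) * s powr (1/\<theta> - 1))"
        by (intro continuous_intros) auto
      show "(\<lambda>s::real. s powr (1/\<theta>)) ` {0<..} = {0<..}"
      proof (intro subset_antisym subsetI)
        fix y assume "y \<in> (\<lambda>s::real. s powr (1/\<theta>)) ` {0<..}"
        then show "y \<in> {0<..}" by auto
      next
        fix y :: real assume "y \<in> {0<..}"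
        then have y: "y > 0" by auto
        then have "y = (y powr \<theta>) powr (1/\<theta>)" using \<theta>_pos by (simp add: powr_powr)
        then show "y \<in> (\<lambda>s. s powr (1/\<theta>)) ` {0<..}" using y by (intro image_eqI[where x="y powr \<theta>"]) auto
      qed
    qed (use \<theta>_pos in auto)
    moreover have "(\<integral>\<^sup>+u. ennreal (indicator N0 u * indicator {0<..} u) \<partial>lborel) = 0"
    proof -
      have "(\<integral>\<^sup>+u. ennreal (indicator N0 u * indicator {0<..} u) \<partial>lborel) \<le> (\<integral>\<^sup>+u. indicator N0 u \<partial>lborel)"
        by (intro nn_integral_mono) (auto split: split_indicator)
      also have "\<dots> = 0" using N0 by simp
      finally show ?thesis by simp
    qed
    ultimately have "AE s in lborel. ennreal (indicator N0 (s powr (1/\<theta>)) * ((1/\<theta>) * s powr (1/\<theta> - 1)) * indicator {0<..} s) = 0"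
      by (subst nn_integral_0_iff_AE[symmetric]) auto
    then show ?thesis
    proof eventually_elim
      case (elim s)
      show ?case
      proof
        assume "s > 0"
        then have "(1/\<theta>) * s powr (1/\<theta> - 1) > 0" using \<theta>_pos by simp
        then show "s powr (1/\<theta>) \<notin> N0" using elim \<open>s > 0\<close> by (auto simp: indicator_def)
      qed
    qed
  qed
  have part1: "is_inverse_laplace G
               (\<lambda>s. 1 / (A (s powr (1 / \<theta>)) * (s powr (1 / \<theta>) + 1)\<^sup>2)
                     * fZ (1 / (s powr (1 / \<theta>) + 1)))"
    unfolding is_inverse_laplace_def using AEs
  proof eventually_elim
    case (elim s)
    show ?case
    proof
      assume s: "s > 0"
      define t where "t = s powr (1/\<theta>)"
      have t: "t > 0" "t \<notin> N0" using elim s by (auto simp: t_def)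
      have "f1 t = f2 t" using N0(1) t by auto
      then have ft: "ennreal (fZ (1 / (t + 1)) / (t + 1)\<^sup>2) = \<Phi> t" unfolding f1_def f2_def using t by simp
      have ts: "t powr \<theta> = s" unfolding t_def using s \<theta>_pos by (simp add: powr_powr)
      have At: "A t > 0" using A_pos t by simp
      define V where "V = 1 / (A t * (t + 1)\<^sup>2) * fZ (1 / (t + 1))"
      have V_nn: "V \<ge> 0" unfolding V_def using At fZ_nonneg t by simp
      have pw: "exp (- s * (lam * x powr \<theta>)) * G (lam * x powr \<theta>) * (lam * \<theta> * x powr (\<theta> - 1)) =
           (1 / A t) * (x * fX x * fY (t * x))" if x: "x > 0" for x
      proof -
        have "fY (t * x) = A t * B x * C (t * x)" using decomp[of x t] x t by (simp add: mult.commute)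
        also have "C (t * x) = exp (- lam * (s * x powr \<theta>))"
          using C_def[of "t * x"] x t ts by (simp add: powr_mult)
        finally have fy: "fY (t * x) = A t * B x * exp (- lam * (s * x powr \<theta>))" .
        have xx: "x powr (2 - \<theta>) * x powr (\<theta> - 1) = x"
          using x by (simp add: powr_add[symmetric])
        have "exp (- s * (lam * x powr \<theta>)) * G (lam * x powr \<theta>) * (lam * \<theta> * x powr (\<theta> - 1)) =
              exp (- lam * (s * x powr \<theta>)) * (x powr (2 - \<theta>) * x powr (\<theta> - 1)) * fX x * B x"
          unfolding Gx[OF x] using lam_pos \<theta>_pos by (simp add: field_simps)
        also have "\<dots> = (1 / A t) * (x * fX x * fY (t * x))"
          unfolding xx fy using At by (simp add: field_simps)
        finally show ?thesis .
      qed
      have "(\<integral>\<^sup>+u. exp (- s * u) * G u * indicator {0<..} u \<partial>lborel) =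
        (\<integral>\<^sup>+x. exp (- s * (lam * x powr \<theta>)) * G (lam * x powr \<theta>) * (lam * \<theta> * x powr (\<theta> - 1)) * indicator {0<..} x \<partial>lborel)"
      proof (rule subst_pos[where f = "\<lambda>u. exp (- s * u) * G u" and g = "\<lambda>x. lam * x powr \<theta>" and g' = "\<lambda>x. lam * \<theta> * x powr (\<theta> - 1)"])
        show "((\<lambda>x. lam * x powr \<theta>) has_real_derivative lam * \<theta> * x powr (\<theta> - 1)) (at x)" if "x > 0" for x :: real
          using DERIV_cmult[OF has_real_derivative_powr[OF that], of lam \<theta>] by (simp add: mult.assoc)
        show "continuous_on {0<..} (\<lambda>x::real. lam * \<theta> * x powr (\<theta> - 1))"
          by (intro continuous_intros) auto
        show "(\<lambda>x::real. lam * x powr \<theta>) ` {0<..} = {0<..}"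
        proof (intro subset_antisym subsetI)
          fix y assume "y \<in> (\<lambda>x::real. lam * x powr \<theta>) ` {0<..}"
          then show "y \<in> {0<..}" using lam_pos by auto
        next
          fix y :: real assume "y \<in> {0<..}"
          then have y: "y > 0" by auto
          then have "y = lam * ((y / lam) powr (1/\<theta>)) powr \<theta>" using \<theta>_pos lam_pos by (simp add: powr_powr)
          then show "y \<in> (\<lambda>x. lam * x powr \<theta>) ` {0<..}" using y lam_pos
            by (intro image_eqI[where x="(y / lam) powr (1/\<theta>)"]) auto
        qed
      qed (use lam_pos \<theta>_pos in auto)
      also have "\<dots> = (\<integral>\<^sup>+x. ennreal (1 / A t) * (ennreal (x * fX x * fY (t * x)) * indicator {0<..} x) \<partial>lborel)"
      proof (intro nn_integral_cong)
        fix x :: real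
        show "ennreal (exp (- s * (lam * x powr \<theta>)) * G (lam * x powr \<theta>) * (lam * \<theta> * x powr (\<theta> - 1)) * indicator {0<..} x) =
          ennreal (1 / A t) * (ennreal (x * fX x * fY (t * x)) * indicator {0<..} x)"
        proof (cases "x > 0")
          case True
          have nn: "0 \<le> x * fX x * fY (t * x)" using True fX_nonneg fY_nonneg by simp
          have "ennreal (1 / A t * (x * fX x * fY (t * x))) = ennreal (1 / A t) * ennreal (x * fX x * fY (t * x))"
            by (rule ennreal_mult) (use At nn in auto)
          then show ?thesis using True unfolding pw[OF True] by simp
        qed simp
      qed
      also have "\<dots> = ennreal (1 / A t) * \<Phi> t"
        unfolding \<Phi>_def by (rule nn_integral_cmult) measurable
      also have "\<dots> = ennreal V"
        unfolding ft[symmetric] V_def using At fZ_nonneg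
        by (simp add: ennreal_mult'[symmetric] field_simps)
      finally have L: "(\<integral>\<^sup>+u. ennreal (indicator {0<..} u *\<^sub>R (exp (- s * u) * G u)) \<partial>lborel) = ennreal V"
        by (simp add: mult.commute)
      have "integrable lborel (\<lambda>u. indicator {0<..} u *\<^sub>R (exp (- s * u) * G u)) \<and>
            integral\<^sup>L lborel (\<lambda>u. indicator {0<..} u *\<^sub>R (exp (- s * u) * G u)) = V"
        by (rule nn_integral_eq_integrable[THEN iffD1, OF _ _ V_nn L]) (auto simp: G_nn)
      then show "has_laplace_at G s (1 / (A (s powr (1 / \<theta>)) * (s powr (1 / \<theta>) + 1)\<^sup>2) * fZ (1 / (s powr (1 / \<theta>) + 1)))"
        unfolding has_laplace_at_def laplace_transform_def set_integrable_def set_lebesgue_integral_def V_def t_def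
        by simp
    qed
  qed
  show ?thesis using part1 part2 by blast
qed

end
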